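(* Let $a>0$, $t_f>0$, $0<\lambda<1$, and real $u_L \neq u_R$. For $h>0$ let $\nu_h = \frac{a h (1-\lambda)}{2}$ and $$u_h(x) = \frac{u_L+u_R}{2} + \frac{u_R-u_L}{2}\operatorname{erf}\!\left(\frac{x-a t_f}{\sqrt{4\nu_h t_f}}\right), \qquad x\in\mathbb{R},$$ where $\operatorname{erf}(\zeta) = \frac{2}{\sqrt{\pi}}\int_0^\zeta e^{-s^2}\,ds$. Then there is a constant $C>0$ depending only on $a,t_f,\lambda,u_L,u_R$ (not on $h$) such that for all $h,h'>0$, $$\|u_h - u_{h'}\|_{L_1(\mathbb{R})} = C\,\left|\sqrt{h}-\sqrt{h'}\right|.$$ Consequently, for any pairwise distinct $h_1,h_2,h_3>0$ and any ordering $(i,j,k)$ of $\{1,2,3\}$, $\sigma = 1/2$ solves $$\frac{\|u_{h_i}-u_{h_j}\|_{L_1}}{\|u_{h_j}-u_{h_k}\|_{L_1}} = \frac{|h_i^\sigma - h_j^\sigma|}{|h_j^\sigma - h_k^\sigma|};$$ i.e. all three variants $\mathcal{R}(u_{h_1},u_{h_2},u_{h_3})$, $\mathcal{R}(u_{h_1},u_{h_3},u_{h_2})$, $\mathcal{R}(u_{h_2},u_{h_1},u_{h_3})$ of the Richardson convergence-rate estimate yield the rate $1/2$.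
   Context: Setting: $u_h$ is the solution at time $t_f$ of the truncated modified equation $U_t + aU_x - \nu_h U_{xx} = 0$ of the first-order upwind scheme $u_i^{n+1} = u_i^n - \lambda(u_i^n - u_{i-1}^n)$ (CFL number $\lambda = a\Delta t/h$, same $\lambda$ at all resolutions) for linear advection $u_t + a u_x=0$ with jump initial data $u=u_L$ for $x<0$, $u=u_R$ for $x\ge0$; it is taken as the model of the numerical solution at grid spacing $h$. Richardson convergence-rate estimate: $\mathcal{R}(v_1,v_2,v_3)$, for approximations $v_m$ at spacings $g_m$, denotes the solution $\sigma$ of $\frac{\|v_1-v_2\|}{\|v_2-v_3\|} = \frac{|g_1^\sigma-g_2^\sigma|}{|g_2^\sigma-g_3^\sigma|}$ with $\|\cdot\|$ the $L_1$ norm. *)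

theory Defs
  imports "HOL-Analysis.Analysis"
begin

definition erf :: "real \<Rightarrow> real" where
  "erf z = 2 / sqrt pi *
     (if 0 \<le> z then integral {0..z} (\<lambda>s. exp (- s\<^sup>2))
      else - integral {z..0} (\<lambda>s. exp (- s\<^sup>2)))"

text \<open>Numerical viscosity of the upwind scheme's modified equation.\<close>
definition nu_h :: "real \<Rightarrow> real \<Rightarrow> real \<Rightarrow> real" where
  "nu_h a lam h = a * h * (1 - lam) / 2"

definition u_h :: "real \<Rightarrow> real \<Rightarrow> real \<Rightarrow> real \<Rightarrow> real \<Rightarrow> real \<Rightarrow> real \<Rightarrow> real" where
  "u_h a tf lam uL uR h x =
     (uL + uR) / 2 + (uR - uL) / 2 * erf ((x - a * tf) / sqrt (4 * nu_h a lam h * tf))"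

definition L1_dist :: "(real \<Rightarrow> real) \<Rightarrow> (real \<Rightarrow> real) \<Rightarrow> real" where
  "L1_dist f g = (LINT x|lborel. \<bar>f x - g x\<bar>)"

end

theory Submission imports Defs "HOL-Real_Asymp.Real_Asymp" begin

lemma erf_deriv: "(erf has_real_derivative (2 / sqrt pi * exp (- z\<^sup>2))) (at z)"
proof -
  define f where "f = (\<lambda>s::real. exp (- s\<^sup>2))"
  define a0 where "a0 = min 0 z - 1"
  define b0 where "b0 = max 0 z + 1"
  define J where "J = (\<lambda>x. integral {a0..x} f)"
  have cont: "continuous_on {a0..b0} f" unfolding f_def by (intro continuous_intros)
  have intg: "\<And>c d. f integrable_on {c..d}" unfolding f_def
    by (intro integrable_continuous_real continuous_intros)
  have "(J has_real_derivative f z) (at z within {a0..b0})"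
    unfolding J_def by (rule integral_has_real_derivative[OF cont]) (auto simp: a0_def b0_def)
  moreover have "at z within {a0..b0} = at z"
    by (rule at_within_Icc_at) (auto simp: a0_def b0_def)
  ultimately have dJ: "(J has_real_derivative f z) (at z)" by simp
  have d2: "((\<lambda>x. 2 / sqrt pi * (J x - J 0)) has_real_derivative 2 / sqrt pi * exp (- z\<^sup>2)) (at z)"
    using DERIV_cmult[OF DERIV_diff[OF dJ DERIV_const[of "J 0"]], of "2 / sqrt pi"] by (simp add: f_def)
  show ?thesis
  proof (rule has_field_derivative_transform_within_open[OF d2, of "{a0<..}"])
    show "open {a0<..}" by simp
    show "z \<in> {a0<..}" by (auto simp: a0_def)
    fix x assume x: "x \<in> {a0<..}"
    show "2 / sqrt pi * (J x - J 0) = erf x"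
    proof (cases "0 \<le> x")
      case True
      have "integral {a0..0} f + integral {0..x} f = integral {a0..x} f"
        using Henstock_Kurzweil_Integration.integral_combine[where a=a0 and c=0 and b=x and f=f] intg True by (auto simp: a0_def)
      then show ?thesis using True by (simp add: erf_def J_def f_def)
    next
      case False
      have "integral {a0..x} f + integral {x..0} f = integral {a0..0} f"
        using Henstock_Kurzweil_Integration.integral_combine[where a=a0 and c=x and b=0 and f=f] intg False x by (auto simp: a0_def)
      then show ?thesis using False by (simp add: erf_def J_def f_def algebra_simps flip: add_divide_distrib distrib_left)
    qed
  qed
qed


lemma erf_deriv_chain [derivative_intros]:
  "(f has_real_derivative f') (at x within S) \<Longrightarrow>
   ((\<lambda>x. erf (f x)) has_real_derivative (2 / sqrt pi * exp (- (f x)\<^sup>2) * f')) (at x within S)"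
  using DERIV_chain2[OF erf_deriv] by blast

lemma erf_bound:
  fixes u v :: real
  assumes "u * v \<ge> 0" "\<bar>v\<bar> \<le> \<bar>u\<bar>"
  shows "\<bar>erf u - erf v\<bar> \<le> 2 / sqrt pi * \<bar>u - v\<bar> * exp (- v\<^sup>2)"
proof -
  have key: "\<bar>erf q - erf p\<bar> \<le> 2 / sqrt pi * \<bar>q - p\<bar> * exp (- w\<^sup>2)"
    if pq: "p < q" and wx: "\<And>\<xi>. p < \<xi> \<Longrightarrow> \<xi> < q \<Longrightarrow> w\<^sup>2 \<le> \<xi>\<^sup>2" for p q w :: real
  proof -
    obtain \<xi> where xi: "p < \<xi>" "\<xi> < q" "erf q - erf p = (q - p) * (2 / sqrt pi * exp (- \<xi>\<^sup>2))"
    proof -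
      have "\<exists>z>p. z < q \<and> erf q - erf p = (q - p) * (2 / sqrt pi * exp (- z\<^sup>2))"
        by (rule MVT2) (use pq erf_deriv in auto)
      then show ?thesis using that by blast
    qed
    have "exp (- \<xi>\<^sup>2) \<le> exp (- w\<^sup>2)" using wx[OF xi(1,2)] by simp
    then have "(q - p) * (2 / sqrt pi * exp (- \<xi>\<^sup>2)) \<le> (q - p) * (2 / sqrt pi * exp (- w\<^sup>2))"
      using xi by (intro mult_left_mono) (auto intro!: mult_left_mono)
    moreover have "0 \<le> (q - p) * (2 / sqrt pi * exp (- \<xi>\<^sup>2))" using xi by auto
    ultimately have "\<bar>erf q - erf p\<bar> \<le> (q - p) * (2 / sqrt pi * exp (- w\<^sup>2))"
      using xi(3) by linarith
    then show ?thesis using pq by (simp add: algebra_simps)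
  qed
  consider "u < v" | "u = v" | "v < u" by linarith
  then show ?thesis
  proof cases
    case 1
    then have "v \<le> 0" using assms by (auto simp: abs_if zero_le_mult_iff split: if_splits)
    have "\<And>\<xi>. u < \<xi> \<Longrightarrow> \<xi> < v \<Longrightarrow> v\<^sup>2 \<le> \<xi>\<^sup>2"
      using \<open>v \<le> 0\<close> by (subst abs_le_square_iff[symmetric]) auto
    then show ?thesis using key[OF 1, of v] by (simp add: abs_minus_commute)
  next
    case 2 then show ?thesis by simp
  next
    case 3
    then have "v \<ge> 0" using assms by (auto simp: abs_if zero_le_mult_iff split: if_splits)
    have "\<And>\<xi>. v < \<xi> \<Longrightarrow> \<xi> < u \<Longrightarrow> v\<^sup>2 \<le> \<xi>\<^sup>2"
      using \<open>v \<ge> 0\<close> by (simp add: power_mono)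
    then show ?thesis using key[OF 3, of v] by (simp add: abs_minus_commute)
  qed
qed

lemma erf_mono: assumes "u \<le> v" shows "erf u \<le> erf v"
proof (cases "u = v")
  case False
  then have "u < v" using assms by simp
  have "\<exists>z>u. z < v \<and> erf v - erf u = (v - u) * (2 / sqrt pi * exp (- z\<^sup>2))"
    by (rule MVT2) (use \<open>u < v\<close> erf_deriv in auto)
  then obtain z where "erf v - erf u = (v - u) * (2 / sqrt pi * exp (- z\<^sup>2))" by blast
  moreover have "0 \<le> (v - u) * (2 / sqrt pi * exp (- z\<^sup>2))" using \<open>u < v\<close> by simp
  ultimately show ?thesis by linarith
qed simp


lemma sqrt_pi_div: "a * sqrt pi / pi = a / sqrt pi"
proof -
  have "sqrt pi * sqrt pi = pi" by simp
  then show ?thesis by (simp add: field_simps)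
qed

lemma key_limits:
  fixes \<alpha> \<beta> c :: real
  assumes ab: "0 < \<alpha>" "\<alpha> < \<beta>"
  defines "g \<equiv> \<lambda>x. erf ((x - c) / \<alpha>) - erf ((x - c) / \<beta>)"
  defines "P \<equiv> \<lambda>x. (x - c) * g x + (\<alpha> * exp (- ((x - c) / \<alpha>)\<^sup>2) - \<beta> * exp (- ((x - c) / \<beta>)\<^sup>2)) / sqrt pi"
  shows "\<And>x. (P has_real_derivative g x) (at x)"
    and "(P \<longlongrightarrow> 0) at_top" and "(P \<longlongrightarrow> 0) at_bot"
    and "P c = (\<alpha> - \<beta>) / sqrt pi"
proof -
  show "P c = (\<alpha> - \<beta>) / sqrt pi" by (simp add: P_def g_def diff_divide_distrib)
next
  fix x
  show "(P has_real_derivative g x) (at x)"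
    unfolding P_def g_def
    using ab apply (auto intro!: derivative_eq_intros)
    apply (simp only: sqrt_pi_div)
    apply (simp add: field_simps)
    done
next
  define B where "B = (\<lambda>x. 2 / sqrt pi * (x - c)\<^sup>2 * (1/\<alpha> - 1/\<beta>) * exp (- ((x - c) / \<beta>)\<^sup>2))"
  have bnd: "norm ((x - c) * g x) \<le> B x" for x
  proof -
    have "\<bar>g x\<bar> \<le> 2 / sqrt pi * \<bar>(x - c) / \<alpha> - (x - c) / \<beta>\<bar> * exp (- ((x - c) / \<beta>)\<^sup>2)"
      unfolding g_def
    proof (rule erf_bound)
      have "(x - c) / \<alpha> * ((x - c) / \<beta>) = (x - c)\<^sup>2 / (\<alpha> * \<beta>)"
        by (simp add: power2_eq_square)
      then show "0 \<le> (x - c) / \<alpha> * ((x - c) / \<beta>)" using ab by simp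
      show "\<bar>(x - c) / \<beta>\<bar> \<le> \<bar>(x - c) / \<alpha>\<bar>" using ab
        by (simp add: abs_divide divide_left_mono)
    qed
    also have "\<bar>(x - c) / \<alpha> - (x - c) / \<beta>\<bar> = \<bar>x - c\<bar> * (1/\<alpha> - 1/\<beta>)"
    proof -
      have "(x - c) / \<alpha> - (x - c) / \<beta> = (x - c) * (1/\<alpha> - 1/\<beta>)" by (simp add: algebra_simps)
      moreover have "1/\<beta> \<le> 1/\<alpha>" using ab by (simp add: frac_le)
      ultimately show ?thesis by (simp add: abs_mult)
    qed
    finally have "\<bar>g x\<bar> \<le> 2 / sqrt pi * (\<bar>x - c\<bar> * (1/\<alpha> - 1/\<beta>)) * exp (- ((x - c) / \<beta>)\<^sup>2)" .
    then have "\<bar>x - c\<bar> * \<bar>g x\<bar> \<le> \<bar>x - c\<bar> * (2 / sqrt pi * (\<bar>x - c\<bar> * (1/\<alpha> - 1/\<beta>)) * exp (- ((x - c) / \<beta>)\<^sup>2))"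
      by (rule mult_left_mono) simp
    also have "\<bar>x - c\<bar> * (2 / sqrt pi * (\<bar>x - c\<bar> * (1/\<alpha> - 1/\<beta>)) * exp (- ((x - c) / \<beta>)\<^sup>2))
        = 2 / sqrt pi * (\<bar>x - c\<bar> * \<bar>x - c\<bar>) * (1/\<alpha> - 1/\<beta>) * exp (- ((x - c) / \<beta>)\<^sup>2)"
      by (simp only: mult_ac)
    also have "\<bar>x - c\<bar> * \<bar>x - c\<bar> = (x - c)\<^sup>2" by (simp add: power2_eq_square abs_mult_self_eq)
    finally show ?thesis by (simp add: B_def abs_mult)
  qed
  have B_top: "(B \<longlongrightarrow> 0) at_top" unfolding B_def using ab by real_asymp
  have B_bot: "(B \<longlongrightarrow> 0) at_bot" unfolding B_def using ab by real_asymp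
  have ex_top: "((\<lambda>x. exp (- ((x - c) / \<gamma>)\<^sup>2)) \<longlongrightarrow> 0) at_top" if "\<gamma> > 0" for \<gamma> :: real
    using that by real_asymp
  have ex_bot: "((\<lambda>x. exp (- ((x - c) / \<gamma>)\<^sup>2)) \<longlongrightarrow> 0) at_bot" if "\<gamma> > 0" for \<gamma> :: real
    using that by real_asymp
  have e_top: "((\<lambda>x. (\<alpha> * exp (- ((x - c) / \<alpha>)\<^sup>2) - \<beta> * exp (- ((x - c) / \<beta>)\<^sup>2)) / sqrt pi) \<longlongrightarrow> 0) at_top"
  proof -
    have "((\<lambda>x. (\<alpha> * exp (- ((x - c) / \<alpha>)\<^sup>2) - \<beta> * exp (- ((x - c) / \<beta>)\<^sup>2)) / sqrt pi) \<longlongrightarrow> (\<alpha> * 0 - \<beta> * 0) / sqrt pi) at_top"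
      by (intro tendsto_intros ex_top) (use ab in auto)
    then show ?thesis by simp
  qed
  have e_bot: "((\<lambda>x. (\<alpha> * exp (- ((x - c) / \<alpha>)\<^sup>2) - \<beta> * exp (- ((x - c) / \<beta>)\<^sup>2)) / sqrt pi) \<longlongrightarrow> 0) at_bot"
  proof -
    have "((\<lambda>x. (\<alpha> * exp (- ((x - c) / \<alpha>)\<^sup>2) - \<beta> * exp (- ((x - c) / \<beta>)\<^sup>2)) / sqrt pi) \<longlongrightarrow> (\<alpha> * 0 - \<beta> * 0) / sqrt pi) at_bot"
      by (intro tendsto_intros ex_bot) (use ab in auto)
    then show ?thesis by simp
  qed
  have "((\<lambda>x. (x - c) * g x) \<longlongrightarrow> 0) at_top"
    by (rule Lim_null_comparison[OF always_eventually B_top]) (use bnd in auto)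
  from tendsto_add[OF this e_top] show "(P \<longlongrightarrow> 0) at_top" by (simp add: P_def)
  have "((\<lambda>x. (x - c) * g x) \<longlongrightarrow> 0) at_bot"
    by (rule Lim_null_comparison[OF always_eventually B_bot]) (use bnd in auto)
  from tendsto_add[OF this e_bot] show "(P \<longlongrightarrow> 0) at_bot" by (simp add: P_def)
qed


lemma isCont_erf: "isCont erf z"
  using DERIV_isCont[OF erf_deriv] .

lemma L1_erf:
  fixes \<alpha> \<beta> c :: real
  assumes ab: "0 < \<alpha>" "\<alpha> < \<beta>"
  shows "integrable lborel (\<lambda>x. \<bar>erf ((x - c) / \<alpha>) - erf ((x - c) / \<beta>)\<bar>)"
    and "(LINT x|lborel. \<bar>erf ((x - c) / \<alpha>) - erf ((x - c) / \<beta>)\<bar>) = 2 * (\<beta> - \<alpha>) / sqrt pi"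
proof -
  define g where "g = (\<lambda>x. erf ((x - c) / \<alpha>) - erf ((x - c) / \<beta>))"
  define P where "P = (\<lambda>x. (x - c) * g x + (\<alpha> * exp (- ((x - c) / \<alpha>)\<^sup>2) - \<beta> * exp (- ((x - c) / \<beta>)\<^sup>2)) / sqrt pi)"
  note K0 = key_limits[OF ab, of c]
  have K1: "\<And>x. (P has_real_derivative g x) (at x)" using K0(1) by (simp add: P_def g_def)
  have K2: "(P \<longlongrightarrow> 0) at_top" using K0(2) by (simp add: P_def g_def)
  have K3: "(P \<longlongrightarrow> 0) at_bot" using K0(3) by (simp add: P_def g_def)
  have K4: "P c = (\<alpha> - \<beta>) / sqrt pi" using K0(4) by (simp add: P_def g_def)
  have gc: "isCont g x" for x
    unfolding g_def by (intro isCont_diff isCont_o2[OF _ isCont_erf] continuous_intros) (use ab in auto)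
  have g_nonneg: "g x \<ge> 0" if "x \<ge> c" for x
  proof -
    have "(x - c) / \<beta> \<le> (x - c) / \<alpha>" using ab that by (intro divide_left_mono) auto
    then show ?thesis unfolding g_def using erf_mono by simp
  qed
  have g_nonpos: "g x \<le> 0" if "x \<le> c" for x
  proof -
    have "(x - c) / \<alpha> \<le> (x - c) / \<beta>" using ab that
      by (intro divide_left_mono_neg) auto
    then show ?thesis unfolding g_def using erf_mono by simp
  qed
  have Pc: "isCont P c" using DERIV_isCont[OF K1] .
  have R: "set_integrable lborel (einterval (ereal c) \<infinity>) g \<and>
          (LBINT x=ereal c..\<infinity>. g x) = 0 - P c"
  proof -
    have "ereal c < \<infinity>" by simp
    moreover have "ereal c < \<infinity>" by simp
    moreover have "\<And>x. ereal c < ereal x \<Longrightarrow> ereal x < \<infinity> \<Longrightarrow> (P has_real_derivative g x) (at x)" using K1 .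
    moreover have "\<And>x. ereal c < ereal x \<Longrightarrow> ereal x < \<infinity> \<Longrightarrow> isCont g x" using gc .
    moreover have "AE x in lborel. ereal c < ereal x \<longrightarrow> ereal x < \<infinity> \<longrightarrow> 0 \<le> g x"
      by (rule AE_I2) (auto intro: g_nonneg)
    moreover have "((P \<circ> real_of_ereal) \<longlongrightarrow> P c) (at_right (ereal c))"
      unfolding ereal_tendsto_simps1
      using Pc by (simp add: isCont_def tendsto_mono[OF at_within_le_at])
    moreover have "((P \<circ> real_of_ereal) \<longlongrightarrow> 0) (at_left \<infinity>)"
      unfolding ereal_tendsto_simps1 using K2 .
    ultimately show ?thesis using interval_integral_FTC_nonneg[where F = P and f = g] by blast
  qed
  have L: "set_integrable lborel (einterval (-\<infinity>) (ereal c)) (\<lambda>x. - g x) \<and>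
          (LBINT x=-\<infinity>..ereal c. - g x) = - P c - - 0"
  proof -
    have "- \<infinity> < ereal c" by simp
    moreover have "\<And>x. - \<infinity> < ereal x \<Longrightarrow> ereal x < ereal c \<Longrightarrow> ((\<lambda>x. - P x) has_real_derivative - g x) (at x)"
      using K1 by (intro DERIV_minus)
    moreover have "\<And>x. - \<infinity> < ereal x \<Longrightarrow> ereal x < ereal c \<Longrightarrow> isCont (\<lambda>x. - g x) x" using gc
      by (intro continuous_intros)
    moreover have "AE x in lborel. - \<infinity> < ereal x \<longrightarrow> ereal x < ereal c \<longrightarrow> 0 \<le> - g x"
      by (rule AE_I2) (auto dest: g_nonpos[OF less_imp_le])
    moreover have "(((\<lambda>x. - P x) \<circ> real_of_ereal) \<longlongrightarrow> - P c) (at_left (ereal c))"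
      unfolding ereal_tendsto_simps1
      using Pc by (intro tendsto_minus) (simp add: isCont_def tendsto_mono[OF at_within_le_at])
    moreover have "(((\<lambda>x. - P x) \<circ> real_of_ereal) \<longlongrightarrow> - 0) (at_right (-\<infinity>))"
      unfolding ereal_tendsto_simps1 using K3 by (intro tendsto_minus)
    ultimately show ?thesis using interval_integral_FTC_nonneg[where F = "\<lambda>x. - P x" and f = "\<lambda>x. - g x"] by blast
  qed
  have RI: "integrable lborel (\<lambda>x. indicator {c<..} x * g x)"
    using R by (simp add: set_integrable_def)
  have LI: "integrable lborel (\<lambda>x. indicator {..<c} x * (- g x))"
    using L by (simp add: set_integrable_def)
  have RV: "(LINT x|lborel. indicator {c<..} x * g x) = - P c"
    using R by (simp add: interval_lebesgue_integral_def set_lebesgue_integral_def)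
  have LV: "(LINT x|lborel. indicator {..<c} x * (- g x)) = - P c"
    using L by (simp add: interval_lebesgue_integral_def set_lebesgue_integral_def)
  have eq: "\<bar>g x\<bar> = indicator {..<c} x * (- g x) + indicator {c<..} x * g x" for x
  proof (cases x c rule: linorder_cases)
    case less then show ?thesis using g_nonpos[of x] by (simp add: indicator_def)
  next
    case equal then show ?thesis by (simp add: g_def)
  next
    case greater then show ?thesis using g_nonneg[of x] by (simp add: indicator_def)
  qed
  have I: "integrable lborel (\<lambda>x. \<bar>g x\<bar>)"
    unfolding eq by (rule Bochner_Integration.integrable_add[OF LI RI])
  then show "integrable lborel (\<lambda>x. \<bar>erf ((x - c) / \<alpha>) - erf ((x - c) / \<beta>)\<bar>)"
    by (simp add: g_def)
  have "(LINT x|lborel. \<bar>g x\<bar>) = - P c + - P c"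
    unfolding eq Bochner_Integration.integral_add[OF LI RI] LV RV ..
  also have "\<dots> = 2 * (\<beta> - \<alpha>) / sqrt pi" using K4 by (simp add: field_simps)
  finally show "(LINT x|lborel. \<bar>erf ((x - c) / \<alpha>) - erf ((x - c) / \<beta>)\<bar>) = 2 * (\<beta> - \<alpha>) / sqrt pi"
    by (simp add: g_def)
qed


lemma L1_erf_gen:
  fixes \<alpha> \<beta> c :: real
  assumes "0 < \<alpha>" "0 < \<beta>"
  shows "integrable lborel (\<lambda>x. \<bar>erf ((x - c) / \<alpha>) - erf ((x - c) / \<beta>)\<bar>) \<and>
         (LINT x|lborel. \<bar>erf ((x - c) / \<alpha>) - erf ((x - c) / \<beta>)\<bar>) = 2 * \<bar>\<beta> - \<alpha>\<bar> / sqrt pi"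
proof (cases \<alpha> \<beta> rule: linorder_cases)
  case less then show ?thesis using L1_erf[OF assms(1) less, of c] by simp
next
  case equal then show ?thesis by simp
next
  case greater
  have e: "\<And>x. \<bar>erf ((x - c) / \<alpha>) - erf ((x - c) / \<beta>)\<bar> = \<bar>erf ((x - c) / \<beta>) - erf ((x - c) / \<alpha>)\<bar>"
    by (simp add: abs_minus_commute)
  show ?thesis unfolding e using L1_erf[OF assms(2) greater, of c] greater by simp
qed

lemma diff_formula:
  fixes a tf lam uL uR :: real
  assumes "a > 0" and "tf > 0" and "lam < 1"
  defines "s \<equiv> sqrt (2 * a * (1 - lam) * tf)"
  shows "s > 0"
    and "\<And>h h'. h > 0 \<Longrightarrow> h' > 0 \<Longrightarrow>
      integrable lborel (\<lambda>x. \<bar>u_h a tf lam uL uR h x - u_h a tf lam uL uR h' x\<bar>) \<and>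
      L1_dist (u_h a tf lam uL uR h) (u_h a tf lam uL uR h') = (\<bar>uR - uL\<bar> * s / sqrt pi) * \<bar>sqrt h - sqrt h'\<bar>"
proof -
  show sp: "s > 0" unfolding s_def using assms by simp
  fix h h' :: real assume h: "h > 0" "h' > 0"
  have sq: "sqrt (4 * nu_h a lam k * tf) = s * sqrt k" if "k > 0" for k
  proof -
    have "sqrt (4 * nu_h a lam k * tf) = sqrt ((2 * a * (1 - lam) * tf) * k)"
      by (rule arg_cong[where f = sqrt]) (simp add: nu_h_def)
    also have "\<dots> = s * sqrt k" unfolding s_def by (rule real_sqrt_mult)
    finally show ?thesis .
  qed
  define c where "c = a * tf"
  have ud: "\<bar>u_h a tf lam uL uR h x - u_h a tf lam uL uR h' x\<bar> =
      \<bar>(uR - uL) / 2\<bar> * \<bar>erf ((x - c) / (s * sqrt h)) - erf ((x - c) / (s * sqrt h'))\<bar>" for x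
  proof -
    have "u_h a tf lam uL uR h x - u_h a tf lam uL uR h' x =
        (uR - uL) / 2 * (erf ((x - c) / (s * sqrt h)) - erf ((x - c) / (s * sqrt h')))"
      unfolding u_h_def sq[OF h(1)] sq[OF h(2)] c_def by (simp add: algebra_simps)
    then show ?thesis by (simp only: abs_mult)
  qed
  have pos: "s * sqrt h > 0" "s * sqrt h' > 0" using sp h by auto
  note K = L1_erf_gen[OF pos, of c]
  show "integrable lborel (\<lambda>x. \<bar>u_h a tf lam uL uR h x - u_h a tf lam uL uR h' x\<bar>) \<and>
      L1_dist (u_h a tf lam uL uR h) (u_h a tf lam uL uR h') = (\<bar>uR - uL\<bar> * s / sqrt pi) * \<bar>sqrt h - sqrt h'\<bar>"
  proof
    show "integrable lborel (\<lambda>x. \<bar>u_h a tf lam uL uR h x - u_h a tf lam uL uR h' x\<bar>)"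
      unfolding ud using K by (intro integrable_mult_right) simp
    have "L1_dist (u_h a tf lam uL uR h) (u_h a tf lam uL uR h') =
        \<bar>(uR - uL) / 2\<bar> * (2 * \<bar>s * sqrt h' - s * sqrt h\<bar> / sqrt pi)"
      unfolding L1_dist_def ud integral_mult_right_zero using K by simp
    also have "\<dots> = (\<bar>uR - uL\<bar> * s / sqrt pi) * \<bar>sqrt h - sqrt h'\<bar>"
    proof -
      have "\<bar>s * sqrt h' - s * sqrt h\<bar> = s * \<bar>sqrt h - sqrt h'\<bar>"
        using sp by (simp add: abs_mult abs_minus_commute flip: right_diff_distrib)
      then show ?thesis by simp
    qed
    finally show "L1_dist (u_h a tf lam uL uR h) (u_h a tf lam uL uR h') = (\<bar>uR - uL\<bar> * s / sqrt pi) * \<bar>sqrt h - sqrt h'\<bar>" .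
  qed
qed

theorem mainTheorem2:
  fixes a tf lam uL uR :: real
  assumes "a > 0" and "tf > 0" and "0 < lam" and "lam < 1" and "uL \<noteq> uR"
  shows "(\<exists>C > 0. \<forall>h h'. h > 0 \<longrightarrow> h' > 0 \<longrightarrow>
            integrable lborel (\<lambda>x. \<bar>u_h a tf lam uL uR h x - u_h a tf lam uL uR h' x\<bar>) \<and>
            L1_dist (u_h a tf lam uL uR h) (u_h a tf lam uL uR h') = C * \<bar>sqrt h - sqrt h'\<bar>)
       \<and> (\<forall>hi hj hk. hi > 0 \<longrightarrow> hj > 0 \<longrightarrow> hk > 0 \<longrightarrow> hi \<noteq> hj \<longrightarrow> hj \<noteq> hk \<longrightarrow> hi \<noteq> hk \<longrightarrow>
            L1_dist (u_h a tf lam uL uR hi) (u_h a tf lam uL uR hj) /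
            L1_dist (u_h a tf lam uL uR hj) (u_h a tf lam uL uR hk)
            = \<bar>hi powr (1/2) - hj powr (1/2)\<bar> / \<bar>hj powr (1/2) - hk powr (1/2)\<bar>)"
proof -
  define s where "s = sqrt (2 * a * (1 - lam) * tf)"
  define C where "C = \<bar>uR - uL\<bar> * s / sqrt pi"
  note D1 = diff_formula(1)[OF assms(1,2,4), folded s_def]
  note D2 = diff_formula(2)[OF assms(1,2,4), where uL=uL and uR=uR, folded s_def C_def]
  have Cpos: "C > 0" unfolding C_def using D1 assms(5) by simp
  show ?thesis
  proof
    show "\<exists>C > 0. \<forall>h h'. h > 0 \<longrightarrow> h' > 0 \<longrightarrow>
            integrable lborel (\<lambda>x. \<bar>u_h a tf lam uL uR h x - u_h a tf lam uL uR h' x\<bar>) \<and>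
            L1_dist (u_h a tf lam uL uR h) (u_h a tf lam uL uR h') = C * \<bar>sqrt h - sqrt h'\<bar>"
      using Cpos D2 by blast
    show "\<forall>hi hj hk. hi > 0 \<longrightarrow> hj > 0 \<longrightarrow> hk > 0 \<longrightarrow> hi \<noteq> hj \<longrightarrow> hj \<noteq> hk \<longrightarrow> hi \<noteq> hk \<longrightarrow>
            L1_dist (u_h a tf lam uL uR hi) (u_h a tf lam uL uR hj) /
            L1_dist (u_h a tf lam uL uR hj) (u_h a tf lam uL uR hk)
            = \<bar>hi powr (1/2) - hj powr (1/2)\<bar> / \<bar>hj powr (1/2) - hk powr (1/2)\<bar>"
    proof (intro allI impI)
      fix hi hj hk :: real
      assume p: "hi > 0" "hj > 0" "hk > 0" and "hi \<noteq> hj" "hj \<noteq> hk" "hi \<noteq> hk"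
      have "L1_dist (u_h a tf lam uL uR hi) (u_h a tf lam uL uR hj) /
            L1_dist (u_h a tf lam uL uR hj) (u_h a tf lam uL uR hk)
          = (C * \<bar>sqrt hi - sqrt hj\<bar>) / (C * \<bar>sqrt hj - sqrt hk\<bar>)"
        using D2[OF p(1,2)] D2[OF p(2,3)] by simp
      also have "\<dots> = \<bar>sqrt hi - sqrt hj\<bar> / \<bar>sqrt hj - sqrt hk\<bar>"
        using Cpos by simp
      finally show "L1_dist (u_h a tf lam uL uR hi) (u_h a tf lam uL uR hj) /
            L1_dist (u_h a tf lam uL uR hj) (u_h a tf lam uL uR hk)
            = \<bar>hi powr (1/2) - hj powr (1/2)\<bar> / \<bar>hj powr (1/2) - hk powr (1/2)\<bar>"
        using p by (simp add: powr_half_sqrt)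
    qed
  qed
qed

end
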